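(* Let $h:\mathbb{A}\to\mathbb{A}$ be a monotone continuous function. Then there is a clopen interval $J\subseteq\mathbb{A}$ such that either $h\restriction J$ is constant or $h\restriction J$ is strictly monotone.
   Context: Let $\mathbb{A}_0=\,]0,1]\times\{0\}$, $\mathbb{A}_1=[0,1[\,\times\{1\}$ and $\mathbb{A}=\mathbb{A}_0\cup\mathbb{A}_1$, ordered lexicographically: $\langle a,r\rangle\prec\langle b,s\rangle$ iff $a<b$, or $a=b$ and $r<s$; $\mathbb{A}$ (the double arrow space) carries the order topology. A clopen interval is a nonempty convex subset of $\mathbb{A}$ that is clopen. A (partial) function $f:\mathbb{A}\to\mathbb{A}$ is monotone if it is non-decreasing or non-increasing, and strictly monotone if it is strictly increasing or strictly decreasing. *)

theory Defs
  imports "HOL-Analysis.Analysis"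
begin

text \<open>The double arrow space: points are pairs (a, r) with r a boolean
  (False for 0, True for 1); A0 = ]0,1] x {0}, A1 = [0,1[ x {1}.\<close>

typedef darrow = "{p :: real \<times> bool.
    (\<not> snd p \<and> 0 < fst p \<and> fst p \<le> 1) \<or> (snd p \<and> 0 \<le> fst p \<and> fst p < 1)}"
  by (rule exI[of _ "(1, False)"]) auto

instantiation darrow :: linorder
begin

definition less_darrow :: "darrow \<Rightarrow> darrow \<Rightarrow> bool" where
  "less_darrow x y \<longleftrightarrow> fst (Rep_darrow x) < fst (Rep_darrow y) \<or>
     (fst (Rep_darrow x) = fst (Rep_darrow y) \<and> snd (Rep_darrow x) < snd (Rep_darrow y))"

definition less_eq_darrow :: "darrow \<Rightarrow> darrow \<Rightarrow> bool" where
  "less_eq_darrow x y \<longleftrightarrow> fst (Rep_darrow x) < fst (Rep_darrow y) \<or>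
     (fst (Rep_darrow x) = fst (Rep_darrow y) \<and> snd (Rep_darrow x) < snd (Rep_darrow y)) \<or> x = y"

instance
proof
  fix x y z :: darrow
  have inj: "x = y \<longleftrightarrow> fst (Rep_darrow x) = fst (Rep_darrow y) \<and> snd (Rep_darrow x) = snd (Rep_darrow y)"
    for x y by (simp add: Rep_darrow_inject[symmetric] prod_eq_iff)
  show "(x < y) = (x \<le> y \<and> \<not> y \<le> x)"
    unfolding less_darrow_def less_eq_darrow_def by (auto simp: inj)
  show "x \<le> x" by (simp add: less_eq_darrow_def)
  show "x \<le> y \<Longrightarrow> y \<le> z \<Longrightarrow> x \<le> z"
    unfolding less_eq_darrow_def less_darrow_def by (auto simp: inj)
  show "x \<le> y \<Longrightarrow> y \<le> x \<Longrightarrow> x = y"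
    unfolding less_eq_darrow_def less_darrow_def by (auto simp: inj)
  show "x \<le> y \<or> y \<le> x"
    unfolding less_eq_darrow_def less_darrow_def by (auto simp: inj)
qed

end

instantiation darrow :: linorder_topology
begin

definition open_darrow :: "darrow set \<Rightarrow> bool" where
  "open_darrow = generate_topology (range lessThan \<union> range greaterThan)"

instance by standard (rule open_darrow_def)

end

definition clopen_interval :: "darrow set \<Rightarrow> bool" where
  "clopen_interval J \<longleftrightarrow> J \<noteq> {} \<and>
     (\<forall>x\<in>J. \<forall>z\<in>J. \<forall>y. x \<le> y \<and> y \<le> z \<longrightarrow> y \<in> J) \<and> open J \<and> closed J"

end

theory Submission
  imports Defs
begin

abbreviation F :: "darrow \<Rightarrow> real" where "F x \<equiv> fst (Rep_darrow x)"
abbreviation S :: "darrow \<Rightarrow> bool" where "S x \<equiv> snd (Rep_darrow x)"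

lemma rep_bounds: "(\<not> S x \<and> 0 < F x \<and> F x \<le> 1) \<or> (S x \<and> 0 \<le> F x \<and> F x < 1)"
  using Rep_darrow[of x] by auto

lemma eq_iff: "x = y \<longleftrightarrow> F x = F y \<and> S x = S y"
  by (simp add: Rep_darrow_inject[symmetric] prod_eq_iff)

lemma less_iff: "x < y \<longleftrightarrow> F x < F y \<or> (F x = F y \<and> \<not> S x \<and> S y)"
  by (auto simp: less_darrow_def)

lemma le_iff: "x \<le> y \<longleftrightarrow> F x < F y \<or> (F x = F y \<and> (S x \<longrightarrow> S y))"
  by (auto simp: less_eq_darrow_def eq_iff)

definition P0 :: "real \<Rightarrow> darrow" where "P0 a = Abs_darrow (a, False)"
definition P1 :: "real \<Rightarrow> darrow" where "P1 a = Abs_darrow (a, True)"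

lemma P0: "0 < a \<Longrightarrow> a \<le> 1 \<Longrightarrow> F (P0 a) = a \<and> \<not> S (P0 a)"
  unfolding P0_def by (simp add: Abs_darrow_inverse)

lemma P1: "0 \<le> a \<Longrightarrow> a < 1 \<Longrightarrow> F (P1 a) = a \<and> S (P1 a)"
  unfolding P1_def by (simp add: Abs_darrow_inverse)

lemma open_ge: assumes "S p" shows "open {p..}"
proof (cases "F p = 0")
  case True
  have "{p..} = UNIV"
  proof (intro set_eqI iffI)
    fix x :: darrow
    show "x \<in> {p..}" using rep_bounds[of p] rep_bounds[of x] True assms by (auto simp: le_iff)
  qed simp
  then show ?thesis by simp
next
  case False
  then have q: "0 < F p" "F p < 1" using rep_bounds[of p] assms by auto
  have "{p..} = {P0 (F p)<..}"
    using P0[of "F p"] q assms by (auto simp: le_iff less_iff)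
  then show ?thesis by simp
qed

lemma open_le: assumes "\<not> S p" shows "open {..p}"
proof (cases "F p = 1")
  case True
  have "{..p} = UNIV"
  proof (intro set_eqI iffI)
    fix x :: darrow
    show "x \<in> {..p}" using rep_bounds[of p] rep_bounds[of x] True assms by (auto simp: le_iff)
  qed simp
  then show ?thesis by simp
next
  case False
  then have q: "0 < F p" "F p < 1" using rep_bounds[of p] assms by auto
  have "{..p} = {..<P1 (F p)}"
    using P1[of "F p"] q assms by (auto simp: le_iff less_iff)
  then show ?thesis by simp
qed

lemma left_pt:
  assumes c: "continuous_on UNIV h" and U: "open U" and hx: "h x \<in> U" and sx: "\<not> S x"
  shows "\<exists>z. F z < F x \<and> h z \<in> U \<and> z < x"
proof -
  have a: "0 < F x" "F x \<le> 1" using rep_bounds[of x] sx by auto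
  have "P0 (F x / 2) < x" using P0[of "F x / 2"] a by (auto simp: less_iff)
  moreover have "open (h -` U)" using open_vimage[OF U c] .
  ultimately obtain b where b: "b < x" "{b<..x} \<subseteq> h -` U"
    using open_left[of "h -` U" x] hx by blast
  have fb: "F b < F x" "0 \<le> F b" using b(1) sx rep_bounds[of b] by (auto simp: less_iff)
  define z where "z = P0 ((F b + F x) / 2)"
  have z: "F z = (F b + F x) / 2" "\<not> S z" using P0[of "(F b + F x) / 2"] fb a unfolding z_def by auto
  have "b < z" "z < x" using z fb by (auto simp: less_iff)
  then have "h z \<in> U" using b(2) by (meson atLeastLessThan_iff greaterThanAtMost_iff less_imp_le subsetD vimageE)
  then show ?thesis using z fb \<open>z < x\<close> by (intro exI[of _ z]) auto
qed

lemma right_pt: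
  assumes c: "continuous_on UNIV h" and U: "open U" and hx: "h x \<in> U" and sx: "S x"
  shows "\<exists>z. F x < F z \<and> h z \<in> U \<and> x < z"
proof -
  have a: "0 \<le> F x" "F x < 1" using rep_bounds[of x] sx by auto
  have "x < P1 ((F x + 1) / 2)" using P1[of "(F x + 1) / 2"] a by (auto simp: less_iff)
  moreover have "open (h -` U)" using open_vimage[OF U c] .
  ultimately obtain b where b: "x < b" "{x..<b} \<subseteq> h -` U"
    using open_right[of "h -` U" x] hx by blast
  have fb: "F x < F b" "F b \<le> 1" using b(1) sx rep_bounds[of b] by (auto simp: less_iff)
  define z where "z = P1 ((F b + F x) / 2)"
  have z: "F z = (F b + F x) / 2" "S z" using P1[of "(F b + F x) / 2"] fb a unfolding z_def by auto
  have "x < z" "z < b" using z fb by (auto simp: less_iff)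
  then have "h z \<in> U" using b(2) by (meson atLeastLessThan_iff greaterThanAtMost_iff less_imp_le subsetD vimageE)
  then show ?thesis using z fb \<open>x < z\<close> by (intro exI[of _ z]) auto
qed

lemma clopen_UNIV: "clopen_interval UNIV"
  unfolding clopen_interval_def by auto

theorem proposition2p2:
  fixes h :: "darrow \<Rightarrow> darrow"
  assumes "mono h \<or> antimono h"
    and "continuous_on UNIV h"
  shows "\<exists>J. clopen_interval J \<and>
           ((\<exists>c. \<forall>x\<in>J. h x = c) \<or>
            strict_mono_on J h \<or> monotone_on J (<) (>) h)"
proof (cases "\<exists>x y. F x < F y \<and> h x = h y")
  case True
  then obtain x y where xy: "F x < F y" "h x = h y" by auto
  define a where "a = F x + (F y - F x) / 3"
  define b where "b = F x + 2 * (F y - F x) / 3"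
  have bx: "0 \<le> F x" "F y \<le> 1" using rep_bounds[of x] rep_bounds[of y] by auto
  have ab: "0 < a" "a < b" "b < 1" "F x < a" "b < F y" using xy bx unfolding a_def b_def by (auto simp: field_simps)
  have pa: "F (P1 a) = a" "S (P1 a)" "F (P0 a) = a" "\<not> S (P0 a)" using P1[of a] P0[of a] ab by auto
  have pb: "F (P1 b) = b" "S (P1 b)" "F (P0 b) = b" "\<not> S (P0 b)" using P1[of b] P0[of b] ab by auto
  define J where "J = {P1 a .. P0 b}"
  have ne: "J \<noteq> {}" using pa pb ab by (auto simp: J_def le_iff)
  have op: "J = {P0 a <..< P1 b}"
    unfolding J_def using pa pb ab by (auto simp: le_iff less_iff)
  have cl: "clopen_interval J"
  proof -
    have "open J" using op by simp
    moreover have "closed J" unfolding J_def by (rule closed_atLeastAtMost)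
    moreover have "\<forall>x\<in>J. \<forall>z\<in>J. \<forall>y. x \<le> y \<and> y \<le> z \<longrightarrow> y \<in> J"
      unfolding J_def by auto
    ultimately show ?thesis unfolding clopen_interval_def using ne by blast
  qed
  have "\<forall>j\<in>J. h j = h x"
  proof
    fix j assume "j \<in> J"
    then have "x \<le> j" "j \<le> y" using pa pb ab unfolding J_def by (auto simp: le_iff)
    then show "h j = h x" using assms(1) xy(2)
      unfolding mono_def antimono_def by (metis order_antisym)
  qed
  then show ?thesis using cl by blast
next
  case False
  have inj: "h x \<noteq> h y" if "x < y" for x y
  proof
    assume hxy: "h x = h y"
    have fe: "F x = F y" using False hxy that by (metis less_iff not_less_iff_gr_or_eq)
    then have s: "\<not> S x" "S y" using that by (auto simp: less_iff)
    define p where "p = h x"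
    show False
    proof (cases "S p")
      case sp: True
      note U = open_ge[OF sp]
      show False
      proof (cases "mono h")
        case True
        obtain z where z: "F z < F x" "h z \<in> {p..}" "z < x"
          using left_pt[OF assms(2) U _ s(1)] p_def by auto
        have "h z \<le> h y" using True z(3) that by (auto simp: mono_def)
        then have "h z = h y" using z(2) hxy p_def by auto
        then show False using False z(1) fe by (metis less_irrefl)
      next
        case False2: False
        then have am: "antimono h" using assms(1) by auto
        obtain z where z: "F y < F z" "h z \<in> {p..}" "y < z"
          using right_pt[OF assms(2) U _ s(2)] p_def hxy by auto
        have "h z \<le> h y" using am z(3) by (auto simp: antimono_def)
        then have "h z = h y" using z(2) hxy p_def by auto
        then show False using False z(1) by (metis less_irrefl)
      qed
    next
      case sp: False
      note U = open_le[OF sp]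
      show False
      proof (cases "mono h")
        case True
        obtain z where z: "F y < F z" "h z \<in> {..p}" "y < z"
          using right_pt[OF assms(2) U _ s(2)] p_def hxy by auto
        have "h y \<le> h z" using True z(3) by (auto simp: mono_def)
        then have "h z = h y" using z(2) hxy p_def by auto
        then show False using False z(1) by (metis less_irrefl)
      next
        case False2: False
        then have am: "antimono h" using assms(1) by auto
        obtain z where z: "F z < F x" "h z \<in> {..p}" "z < x"
          using left_pt[OF assms(2) U _ s(1)] p_def by auto
        have "h x \<le> h z" using am z(3) by (auto simp: antimono_def)
        then have "h z = h x" using z(2) p_def by auto
        then show False using False z(1) by (metis less_irrefl)
      qed
    qed
  qed
  show ?thesis
  proof (cases "mono h")
    case True
    have "strict_mono_on UNIV h"
      unfolding strict_mono_on_def monotone_on_def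
      using True inj by (auto simp: mono_def order_less_le)
    then show ?thesis using clopen_UNIV by blast
  next
    case False
    then have am: "antimono h" using assms(1) by auto
    have "monotone_on UNIV (<) (>) h"
      unfolding monotone_on_def
      using am inj unfolding antimono_def by (metis order_less_le)
    then show ?thesis using clopen_UNIV by blast
  qed
qed

end
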